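(* Let $G=(V,E)$ be a connected, locally finite, undirected graph, fix $o\in V$ and $\beta>0$. The divisible sandpile $s$ with $s(x)=1$ for $x\ne o$ and $s(o)=1+\beta$ stabilizes on $G$ if and only if simple random walk on $G$ is transient.
   Context: $\Delta u(x)=\sum_{y\sim x}(u(y)-u(x))$. A divisible sandpile $s:V\to\mathbb{R}$ stabilizes if there exists $f:V\to[0,\infty)$ with $s+\Delta f\le 1$ pointwise. *)

theory Defs
  imports Complex_Main
begin

definition graph :: "'a set \<Rightarrow> ('a \<Rightarrow> 'a \<Rightarrow> bool) \<Rightarrow> bool" where
  "graph V E \<longleftrightarrow> (\<forall>x y. E x y \<longrightarrow> x \<in> V \<and> y \<in> V \<and> E y x \<and> x \<noteq> y)"

definition locally_finite :: "'a set \<Rightarrow> ('a \<Rightarrow> 'a \<Rightarrow> bool) \<Rightarrow> bool" where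
  "locally_finite V E \<longleftrightarrow> (\<forall>x\<in>V. finite {y. E x y})"

definition connected_graph :: "'a set \<Rightarrow> ('a \<Rightarrow> 'a \<Rightarrow> bool) \<Rightarrow> bool" where
  "connected_graph V E \<longleftrightarrow> (\<forall>x\<in>V. \<forall>y\<in>V. (x, y) \<in> {(a, b). E a b}\<^sup>*)"

definition laplacian :: "('a \<Rightarrow> 'a \<Rightarrow> bool) \<Rightarrow> ('a \<Rightarrow> real) \<Rightarrow> 'a \<Rightarrow> real" where
  "laplacian E u x = (\<Sum>y\<in>{y. E x y}. u y - u x)"

definition stabilizes :: "'a set \<Rightarrow> ('a \<Rightarrow> 'a \<Rightarrow> bool) \<Rightarrow> ('a \<Rightarrow> real) \<Rightarrow> bool" where
  "stabilizes V E s \<longleftrightarrow>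
     (\<exists>f :: 'a \<Rightarrow> real. (\<forall>x\<in>V. 0 \<le> f x) \<and> (\<forall>x\<in>V. s x + laplacian E f x \<le> 1))"

fun srw_prob :: "('a \<Rightarrow> 'a \<Rightarrow> bool) \<Rightarrow> nat \<Rightarrow> 'a \<Rightarrow> 'a \<Rightarrow> real" where
  "srw_prob E 0 x y = (if x = y then 1 else 0)"
| "srw_prob E (Suc n) x y =
     (if {z. E x z} = {} then srw_prob E n x y
      else (\<Sum>z\<in>{z. E x z}. srw_prob E n z y) / real (card {z. E x z}))"

definition srw_transient :: "('a \<Rightarrow> 'a \<Rightarrow> bool) \<Rightarrow> 'a \<Rightarrow> bool" where
  "srw_transient E v0 \<longleftrightarrow> summable (\<lambda>n. srw_prob E n v0 v0)"

end

theory Submission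
  imports Defs
begin

lemma p_nonneg: "0 \<le> srw_prob E n x y"
  by (induction n arbitrary: x) (auto intro!: sum_nonneg divide_nonneg_nonneg)

lemma p_suc:
  assumes "{z. E x z} \<noteq> {}"
  shows "srw_prob E (Suc n) x y = (\<Sum>w\<in>{z. E x z}. srw_prob E n w y) / real (card {z. E x z})"
proof -
  have e: "({z. E x z} = {}) = False" using assms by blast
  show ?thesis by (simp only: srw_prob.simps(2) e if_False)
qed

lemma p_suc_empty:
  assumes "{z. E x z} = {}"
  shows "srw_prob E (Suc n) x y = srw_prob E n x y"
proof -
  have e: "({z. E x z} = {}) = True" using assms by blast
  show ?thesis by (simp only: srw_prob.simps(2) e if_True)
qed

declare srw_prob.simps(2)[simp del]

lemma p_step:
  assumes "E x z" "finite {z. E x z}"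
  shows "srw_prob E n z y / real (card {z. E x z}) \<le> srw_prob E (Suc n) x y"
proof -
  have ne: "{z. E x z} \<noteq> {}" using assms by auto
  have "srw_prob E n z y \<le> (\<Sum>w\<in>{z. E x z}. srw_prob E n w y)"
    by (rule member_le_sum) (use assms p_nonneg in auto)
  then show ?thesis unfolding p_suc[where E=E and x=x, OF ne] by (simp add: divide_right_mono)
qed

lemma reach:
  assumes g: "graph V E" and lf: "locally_finite V E"
    and r: "(v0, x) \<in> {(a, b). E a b}\<^sup>*"
  shows "\<exists>c>0. \<exists>k. \<forall>n. c * srw_prob E n x v0 \<le> srw_prob E (n + k) v0 v0"
  using r
proof (induction rule: rtrancl_induct)
  case base
  show ?case by (rule exI[of _ 1], simp, rule exI[of _ 0], simp)
next
  case (step y x)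
  then obtain c k where c: "c > 0" and ck: "\<And>n. c * srw_prob E n y v0 \<le> srw_prob E (n + k) v0 v0"
    by blast
  have Eyx: "E y x" using step by auto
  have yV: "y \<in> V" using g Eyx unfolding graph_def by blast
  have fin: "finite {z. E y z}" using lf yV unfolding locally_finite_def by blast
  have cardpos: "card {z. E y z} > 0" using fin Eyx card_gt_0_iff by blast
  have cpos: "c / real (card {z. E y z}) > 0" using c cardpos by simp
  have main: "c / real (card {z. E y z}) * srw_prob E n x v0 \<le> srw_prob E (n + Suc k) v0 v0" for n
  proof -
    have "c / real (card {z. E y z}) * srw_prob E n x v0 = c * (srw_prob E n x v0 / real (card {z. E y z}))"
      by simp
    also have "\<dots> \<le> c * srw_prob E (Suc n) y v0"
      using p_step[where E=E and x=y and z=x, OF Eyx fin, of n v0] c by (intro mult_left_mono) auto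
    also have "\<dots> \<le> srw_prob E (Suc n + k) v0 v0" by (rule ck)
    also have "Suc n + k = n + Suc k" by simp
    finally show ?thesis .
  qed
  show ?case using cpos main by blast
qed

lemma green_summable:
  assumes g: "graph V E" and lf: "locally_finite V E" and cg: "connected_graph V E"
    and v0: "v0 \<in> V" and x: "x \<in> V" and tr: "srw_transient E v0"
  shows "summable (\<lambda>n. srw_prob E n x v0)"
proof -
  have "(v0, x) \<in> {(a, b). E a b}\<^sup>*" using cg v0 x unfolding connected_graph_def by blast
  from reach[OF g lf this] obtain c k where c: "c > 0"
    and ck: "\<And>n. c * srw_prob E n x v0 \<le> srw_prob E (n + k) v0 v0" by blast
  have s0: "summable (\<lambda>n. srw_prob E (n + k) v0 v0)"
    using tr summable_iff_shift[where f="\<lambda>n. srw_prob E n v0 v0" and k=k] unfolding srw_transient_def by simp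
  have s: "summable (\<lambda>n. srw_prob E (n + k) v0 v0 / c)"
    by (rule summable_divide[OF s0])
  show ?thesis
  proof (rule summable_comparison_test'[OF s])
    fix n
    show "norm (srw_prob E n x v0) \<le> srw_prob E (n + k) v0 v0 / c"
      using ck[of n] c p_nonneg[of E n x v0] by (simp add: field_simps)
  qed
qed

lemma dir1:
  assumes g: "graph V E" and lf: "locally_finite V E" and v0: "v0 \<in> V" and b: "\<beta> > 0"
    and st: "stabilizes V E (\<lambda>x. if x = v0 then 1 + \<beta> else 1)"
  shows "srw_transient E v0"
proof -
  obtain f where f0: "\<And>x. x \<in> V \<Longrightarrow> 0 \<le> f x"
    and fl: "\<And>x. x \<in> V \<Longrightarrow> (if x = v0 then 1 + \<beta> else 1) + laplacian E f x \<le> 1"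
    using st unfolding stabilizes_def by blast
  let ?N = "\<lambda>x. {z. E x z}"
  let ?d = "\<lambda>x. real (card {z. E x z})"
  have fin: "\<And>x. x \<in> V \<Longrightarrow> finite (?N x)" using lf unfolding locally_finite_def by blast
  have nbV: "\<And>x y. E x y \<Longrightarrow> y \<in> V" using g unfolding graph_def by blast
  have lap: "\<And>x. x \<in> V \<Longrightarrow> laplacian E f x = (\<Sum>y\<in>?N x. f y) - ?d x * f x"
    unfolding laplacian_def by (simp add: sum_subtractf)
  have ne0: "?N v0 \<noteq> {}"
  proof
    assume e: "?N v0 = {}"
    have "laplacian E f v0 = 0" unfolding laplacian_def by (subst e) simp
    with fl[OF v0] b show False by simp
  qed
  have d0: "?d v0 > 0" using ne0 fin[OF v0] card_gt_0_iff by auto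
  define a where "a = \<beta> / ?d v0"
  have apos: "a > 0" using b d0 unfolding a_def by simp
  have key: "\<forall>x\<in>V. a * (\<Sum>k<n. srw_prob E k x v0) \<le> f x" for n
  proof (induction n)
    case 0
    then show ?case using f0 by simp
  next
    case (Suc n)
    show ?case
    proof
      fix x assume xV: "x \<in> V"
      have split: "(\<Sum>k<Suc n. srw_prob E k x v0) = srw_prob E 0 x v0 + (\<Sum>k<n. srw_prob E (Suc k) x v0)"
        by (rule sum.lessThan_Suc_shift)
      show "a * (\<Sum>k<Suc n. srw_prob E k x v0) \<le> f x"
      proof (cases "?N x = {}")
        case True
        then have "(\<Sum>k<n. srw_prob E (Suc k) x v0) = (\<Sum>k<n. srw_prob E k x v0)"
          using p_suc_empty[where E=E and x=x, OF True] by simp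
        moreover have "x \<noteq> v0" using True ne0 by auto
        ultimately have "(\<Sum>k<Suc n. srw_prob E k x v0) = (\<Sum>k<n. srw_prob E k x v0)"
          using split by simp
        then show ?thesis using Suc xV by simp
      next
        case False
        have dx: "?d x > 0" using False fin[OF xV] card_gt_0_iff by auto
        have "(\<Sum>k<n. srw_prob E (Suc k) x v0) = (\<Sum>k<n. (\<Sum>w\<in>?N x. srw_prob E k w v0) / ?d x)"
          using p_suc[where E=E and x=x, OF False] by simp
        also have "\<dots> = (\<Sum>w\<in>?N x. (\<Sum>k<n. srw_prob E k w v0)) / ?d x"
          unfolding sum_divide_distrib[symmetric] by (subst sum.swap) (rule refl)
        finally have eq: "(\<Sum>k<n. srw_prob E (Suc k) x v0) = (\<Sum>w\<in>?N x. (\<Sum>k<n. srw_prob E k w v0)) / ?d x" .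
        have "a * (\<Sum>w\<in>?N x. (\<Sum>k<n. srw_prob E k w v0)) = (\<Sum>w\<in>?N x. a * (\<Sum>k<n. srw_prob E k w v0))"
          by (simp add: sum_distrib_left)
        also have "\<dots> \<le> (\<Sum>w\<in>?N x. f w)"
          by (rule sum_mono) (use Suc nbV in auto)
        finally have le1: "a * (\<Sum>w\<in>?N x. (\<Sum>k<n. srw_prob E k w v0)) \<le> (\<Sum>w\<in>?N x. f w)" .
        have "a * (\<Sum>k<Suc n. srw_prob E k x v0) = a * srw_prob E 0 x v0 + (a * (\<Sum>w\<in>?N x. (\<Sum>k<n. srw_prob E k w v0))) / ?d x"
          using split eq by (simp add: algebra_simps)
        also have "\<dots> \<le> a * srw_prob E 0 x v0 + (\<Sum>w\<in>?N x. f w) / ?d x"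
          using le1 dx by (simp add: divide_right_mono)
        also have "\<dots> \<le> f x"
        proof (cases "x = v0")
          case True
          have "(\<Sum>w\<in>?N x. f w) - ?d x * f x \<le> - \<beta>" using fl[OF xV] lap[OF xV] True by simp
          then have "(\<Sum>w\<in>?N x. f w) \<le> ?d x * f x - \<beta>" by simp
          then have "(\<Sum>w\<in>?N x. f w) / ?d x \<le> (?d x * f x - \<beta>) / ?d x" using dx by (intro divide_right_mono) auto
          also have "\<dots> = f x - a" using dx True unfolding a_def by (simp add: field_simps)
          finally show ?thesis using True by simp
        next
          case F: False
          have "(\<Sum>w\<in>?N x. f w) - ?d x * f x \<le> 0" using fl[OF xV] lap[OF xV] F by simp
          then have "(\<Sum>w\<in>?N x. f w) \<le> ?d x * f x" by simp
          then have "(\<Sum>w\<in>?N x. f w) / ?d x \<le> (?d x * f x) / ?d x" using dx by (intro divide_right_mono) auto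
          also have "\<dots> = f x" using dx by simp
          finally show ?thesis using F by simp
        qed
        finally show ?thesis .
      qed
    qed
  qed
  show ?thesis unfolding srw_transient_def
  proof (rule summableI_nonneg_bounded[where x = "f v0 / a"])
    fix n show "0 \<le> srw_prob E n v0 v0" by (rule p_nonneg)
    show "(\<Sum>i<n. srw_prob E i v0 v0) \<le> f v0 / a"
      using key[of n] v0 apos by (simp add: field_simps)
  qed
qed

lemma dir2:
  assumes g: "graph V E" and lf: "locally_finite V E" and cg: "connected_graph V E"
    and v0: "v0 \<in> V" and b: "\<beta> > 0" and tr: "srw_transient E v0"
  shows "stabilizes V E (\<lambda>x. if x = v0 then 1 + \<beta> else 1)"
proof -
  let ?N = "\<lambda>x. {z. E x z}"
  let ?d = "\<lambda>x. real (card {z. E x z})"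
  have fin: "\<And>x. x \<in> V \<Longrightarrow> finite (?N x)" using lf unfolding locally_finite_def by blast
  have nbV: "\<And>x y. E x y \<Longrightarrow> y \<in> V" using g unfolding graph_def by blast
  have sm: "\<And>x. x \<in> V \<Longrightarrow> summable (\<lambda>n. srw_prob E n x v0)"
    using green_summable[OF g lf cg v0 _ tr] by blast
  have ne0: "?N v0 \<noteq> {}"
  proof
    assume e: "?N v0 = {}"
    have "srw_prob E n v0 v0 = 1" for n using p_suc_empty[where E=E and x=v0, OF e] by (induction n) auto
    then have "(\<lambda>n. srw_prob E n v0 v0) = (\<lambda>n. 1)" by auto
    then have "(\<lambda>n. 1::real) \<longlonglongrightarrow> 0" using tr unfolding srw_transient_def
      by (metis summable_LIMSEQ_zero)
    then show False using LIMSEQ_unique[OF tendsto_const] by force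
  qed
  have d0: "?d v0 > 0" using ne0 fin[OF v0] card_gt_0_iff by auto
  define G where "G x = (\<Sum>n. srw_prob E n x v0)" for x
  define f where "f x = \<beta> / ?d v0 * G x" for x
  have lapG: "(\<Sum>y\<in>?N x. G y) - ?d x * G x = (if x = v0 then - ?d x else 0)" if xV: "x \<in> V" for x
  proof (cases "?N x = {}")
    case True
    then show ?thesis using ne0 by auto
  next
    case False
    have "(\<Sum>y\<in>?N x. G y) = (\<Sum>n. \<Sum>y\<in>?N x. srw_prob E n y v0)"
      unfolding G_def by (rule suminf_sum[symmetric]) (use sm nbV in auto)
    also have "\<dots> = (\<Sum>n. ?d x * srw_prob E (Suc n) x v0)"
      using False fin[OF xV] by (simp add: p_suc[where E=E and x=x, OF False])
    also have "\<dots> = ?d x * (\<Sum>n. srw_prob E (Suc n) x v0)"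
      by (rule suminf_mult) (use sm[OF xV] summable_iff_shift[where f="\<lambda>n. srw_prob E n x v0" and k=1] in simp)
    also have "\<dots> = ?d x * (G x - srw_prob E 0 x v0)"
      unfolding G_def by (simp add: suminf_split_head[OF sm[OF xV]])
    finally show ?thesis by (cases "x = v0") (simp_all add: algebra_simps)
  qed
  show ?thesis unfolding stabilizes_def
  proof (intro exI[of _ f] conjI ballI)
    fix x assume xV: "x \<in> V"
    have "0 \<le> G x" unfolding G_def by (rule suminf_nonneg[OF sm[OF xV] p_nonneg])
    moreover have "0 \<le> \<beta> / ?d v0" using b d0 by simp
    ultimately show "0 \<le> f x" unfolding f_def by (rule mult_nonneg_nonneg[OF _ _, rotated])
    have "laplacian E f x = \<beta> / ?d v0 * ((\<Sum>y\<in>?N x. G y) - ?d x * G x)"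
      unfolding laplacian_def f_def by (simp add: sum_subtractf sum_distrib_left sum_divide_distrib algebra_simps)
    also have "\<dots> = (if x = v0 then - \<beta> else 0)"
    proof (cases "x = v0")
      case True
      then show ?thesis using lapG[OF xV] d0 by simp
    next
      case False
      then show ?thesis using lapG[OF xV] by simp
    qed
    finally have "laplacian E f x = (if x = v0 then - \<beta> else 0)" .
    then show "(if x = v0 then 1 + \<beta> else 1) + laplacian E f x \<le> 1" by simp
  qed
qed

theorem lemma2p12:
  fixes V :: "'a set" and E :: "'a \<Rightarrow> 'a \<Rightarrow> bool" and v0 :: 'a and \<beta> :: real
  assumes "graph V E" and "connected_graph V E" and "locally_finite V E"
    and "v0 \<in> V" and "\<beta> > 0"
  shows "stabilizes V E (\<lambda>x. if x = v0 then 1 + \<beta> else 1) \<longleftrightarrow> srw_transient E v0"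
proof
  assume "stabilizes V E (\<lambda>x. if x = v0 then 1 + \<beta> else 1)"
  then show "srw_transient E v0" by (rule dir1[OF assms(1,3,4,5)])
next
  assume "srw_transient E v0"
  then show "stabilizes V E (\<lambda>x. if x = v0 then 1 + \<beta> else 1)" by (rule dir2[OF assms(1,3,2,4,5)])
qed

end
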